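(* For all integers $n\geq 0$ and $i\geq 1$, $$\bar a_{3i+2}(3n+2)\equiv 0 \pmod 6,\qquad \bar a_{9i+5}(9n+3)\equiv 0 \pmod{12},\qquad \bar a_{9i+8}(9n+3)\equiv 0 \pmod{12}.$$
   Context: For $|q|<1$ and integers $m\geq 1$, write $f_m:=\prod_{j\geq 1}(1-q^{jm})$. For an integer $c\geq 1$, the generalized overcubic partition function $\bar a_c(n)$ is defined by $$\sum_{n\geq 0}\bar a_c(n)q^n=\frac{f_4^{c-1}}{f_1^2f_2^{2c-3}}.$$ *)

theory Defs
  imports "HOL-Computational_Algebra.Formal_Power_Series"
begin

(* f_m = prod_{j>=1} (1 - q^(j m)) as a formal power series over the rationals.
   For m >= 1 the k-th coefficient of the infinite product equals the k-th
   coefficient of the finite product over 1 <= j <= k (factors with j > k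
   only affect coefficients of index > k). *)
definition eta_fps :: "nat \<Rightarrow> rat fps" where
  "eta_fps m = Abs_fps (\<lambda>k. fps_nth (\<Prod>j\<in>{1..k}. (1 - fps_X ^ (j * m))) k)"

(* generating function  f_4^(c-1) / (f_1^2 f_2^(2c-3))
   written as f_4^(c-1) * f_2^3 / (f_1^2 * f_2^(2c)) to avoid negative exponents *)
definition overcubic_gf :: "nat \<Rightarrow> rat fps" where
  "overcubic_gf c = eta_fps 4 ^ (c - 1) * eta_fps 2 ^ 3
                      * inverse (eta_fps 1 ^ 2 * eta_fps 2 ^ (2 * c))"

definition abar :: "nat \<Rightarrow> nat \<Rightarrow> rat" where
  "abar c n = fps_nth (overcubic_gf c) n"

end

theory Submission
  imports Defs
begin

unbundle fps_syntax

definition teq :: "nat \<Rightarrow> rat fps \<Rightarrow> rat fps \<Rightarrow> bool" where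
  "teq T a b \<longleftrightarrow> (\<forall>n\<le>T. a $ n = b $ n)"

lemma teq_refl[simp]: "teq T a a" by (simp add: teq_def)
lemma teq_sym: "teq T a b \<Longrightarrow> teq T b a" by (simp add: teq_def)
lemma teq_trans: "teq T a b \<Longrightarrow> teq T b c \<Longrightarrow> teq T a c" by (simp add: teq_def)
lemma teq_add: "teq T a b \<Longrightarrow> teq T c d \<Longrightarrow> teq T (a + c) (b + d)" by (simp add: teq_def)
lemma teq_diff: "teq T a b \<Longrightarrow> teq T c d \<Longrightarrow> teq T (a - c) (b - d)" by (simp add: teq_def)
lemma teq_mult: "teq T a b \<Longrightarrow> teq T c d \<Longrightarrow> teq T (a * c) (b * d)"
  unfolding teq_def fps_mult_nth by (auto intro!: sum.cong)
lemma teq_power: "teq T a b \<Longrightarrow> teq T (a ^ k) (b ^ k)"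
  by (induction k) (auto intro: teq_mult)
lemma teq_sum: "(\<And>i. i \<in> A \<Longrightarrow> teq T (f i) (g i)) \<Longrightarrow> teq T (sum f A) (sum g A)"
  unfolding teq_def fps_sum_nth by (auto intro!: sum.cong)
lemma teq_eq: "(\<And>T. teq T a b) \<Longrightarrow> a = b"
  unfolding teq_def by (intro fps_ext) blast
lemma teq_inverse:
  assumes "teq T a b" "a $ 0 \<noteq> 0"
  shows "teq T (inverse a) (inverse b)"
proof -
  have b0: "b $ 0 \<noteq> 0" using assms unfolding teq_def by auto
  have "teq T (inverse a * b * inverse b) (inverse a * a * inverse b)"
    using assms(1) by (intro teq_mult teq_refl) (simp add: teq_sym)
  moreover have "inverse a * b * inverse b = inverse a" using b0
    by (simp add: mult.assoc inverse_mult_eq_1')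
  moreover have "inverse a * a * inverse b = inverse b" using assms(2)
    by (simp add: inverse_mult_eq_1)
  ultimately show ?thesis by simp
qed
lemma teq_Xpow_zero: "T < k \<Longrightarrow> teq T (fps_X ^ k * a) 0"
  unfolding teq_def by (simp add: fps_X_power_mult_nth)

definition Pf :: "nat \<Rightarrow> nat \<Rightarrow> rat fps" where
  "Pf m K = (\<Prod>j\<in>{1..K}. 1 - fps_X ^ (j * m))"

lemma Pf_Suc: "Pf m (Suc K) = Pf m K * (1 - fps_X ^ (Suc K * m))"
  unfolding Pf_def by (simp add: prod.nat_ivl_Suc' mult.commute)
lemma Pf_0[simp]: "Pf m 0 = 1" unfolding Pf_def by simp

lemma Pf_teq_le: assumes "m \<ge> 1" "T \<le> K" shows "teq T (Pf m K) (Pf m T)"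
  using assms(2)
proof (induction K rule: dec_induct)
  case base then show ?case by simp
next
  case (step K)
  have lt: "T < Suc K * m" using step.hyps assms(1)
    by (metis less_eq_Suc_le mult_le_mono order_trans nat_mult_1_right le_imp_less_Suc)
  have "teq T (fps_X ^ (Suc K * m)) 0" using teq_Xpow_zero[OF lt, of 1] by simp
  then have "teq T (1 - fps_X ^ (Suc K * m)) (1 - 0)" by (rule teq_diff[OF teq_refl])
  then have "teq T (Pf m K * (1 - fps_X ^ (Suc K * m))) (Pf m T * (1 - 0))"
    by (rule teq_mult[OF step.IH])
  then show ?case by (simp add: Pf_Suc)
qed

lemma Pf_nth_stable: "m \<ge> 1 \<Longrightarrow> n \<le> K \<Longrightarrow> Pf m K $ n = Pf m n $ n"
  using Pf_teq_le[of m n K] unfolding teq_def by auto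

lemma eta_nth: "eta_fps m $ k = Pf m k $ k"
  unfolding eta_fps_def Pf_def by simp

lemma eta_teq: assumes "m \<ge> 1" "T \<le> K" shows "teq T (eta_fps m) (Pf m K)"
  unfolding teq_def eta_nth using assms Pf_nth_stable[of m _ K] by (metis order_trans)

lemma eta_0[simp]: "eta_fps m $ 0 = 1" by (simp add: eta_nth)
lemma Pf_nth_0[simp]: "m \<ge> 1 \<Longrightarrow> Pf m K $ 0 = 1"
  by (induction K) (simp_all add: Pf_Suc)

fun gb :: "'a::comm_ring_1 \<Rightarrow> nat \<Rightarrow> nat \<Rightarrow> 'a" where
  "gb p N 0 = 1"
| "gb p 0 (Suc m) = 0"
| "gb p (Suc N) (Suc m) = gb p N (Suc m) + p ^ (N - m) * gb p N m"

lemma gb_zero: "N < m \<Longrightarrow> gb p N m = 0"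
proof (induction N arbitrary: m)
  case 0 then show ?case by (cases m) auto
next
  case (Suc N) then show ?case by (cases m) auto
qed

lemma gb_diag: "gb p N N = 1"
  by (induction N) (auto simp: gb_zero)

fun tri :: "nat \<Rightarrow> nat" where
  "tri 0 = 0" | "tri (Suc m) = tri m + m"

lemma tri_sq: "2 * tri m + m = m * m"
  by (induction m) (auto simp: algebra_simps)

theorem qbinom:
  fixes p x y :: "'a::comm_ring_1"
  shows "(\<Prod>j<N. y + x * p ^ j) = (\<Sum>m\<le>N. p ^ tri m * gb p N m * x ^ m * y ^ (N - m))"
proof (induction N)
  case 0 then show ?case by simp
next
  case (Suc N)
  define c where "c m = p ^ tri m * gb p N m" for m
  have "(\<Prod>j<Suc N. y + x * p ^ j) = (\<Sum>m\<le>N. c m * x ^ m * y ^ (N - m)) * (y + x * p ^ N)"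
    using Suc by (simp add: c_def)
  also have "\<dots> = (\<Sum>m\<le>N. c m * x ^ m * y ^ (Suc N - m)) + (\<Sum>m\<le>N. p ^ (tri m + N) * gb p N m * x ^ Suc m * y ^ (N - m))"
    unfolding distrib_left sum_distrib_right
  proof (intro arg_cong2[where f="(+)"] sum.cong refl)
    fix m assume "m \<in> {..N}"
    then have "y ^ (Suc N - m) = y ^ (N - m) * y" by (simp add: Suc_diff_le)
    then show "c m * x ^ m * y ^ (N - m) * y = c m * x ^ m * y ^ (Suc N - m)" by (simp add: mult.assoc)
  next
    fix m assume "m \<in> {..N}"
    show "c m * x ^ m * y ^ (N - m) * (x * p ^ N) = p ^ (tri m + N) * gb p N m * x ^ Suc m * y ^ (N - m)"
      by (simp add: c_def power_add algebra_simps)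
  qed
  also have "(\<Sum>m\<le>N. c m * x ^ m * y ^ (Suc N - m)) = (\<Sum>m\<le>Suc N. c m * x ^ m * y ^ (Suc N - m))"
    by (simp add: c_def gb_zero)
  also have "\<dots> = y ^ Suc N + (\<Sum>m\<le>N. p ^ tri (Suc m) * gb p N (Suc m) * x ^ Suc m * y ^ (N - m))"
    by (subst sum.atMost_Suc_shift) (simp add: c_def)
  finally have L: "(\<Prod>j<Suc N. y + x * p ^ j) = y ^ Suc N + (\<Sum>m\<le>N. p ^ tri (Suc m) * gb p N (Suc m) * x ^ Suc m * y ^ (N - m))
     + (\<Sum>m\<le>N. p ^ (tri m + N) * gb p N m * x ^ Suc m * y ^ (N - m))" .
  have "(\<Sum>m\<le>Suc N. p ^ tri m * gb p (Suc N) m * x ^ m * y ^ (Suc N - m))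
      = y ^ Suc N + (\<Sum>m\<le>N. p ^ tri (Suc m) * gb p (Suc N) (Suc m) * x ^ Suc m * y ^ (N - m))"
    by (subst sum.atMost_Suc_shift) simp
  also have "(\<Sum>m\<le>N. p ^ tri (Suc m) * gb p (Suc N) (Suc m) * x ^ Suc m * y ^ (N - m))
     = (\<Sum>m\<le>N. p ^ tri (Suc m) * gb p N (Suc m) * x ^ Suc m * y ^ (N - m))
     + (\<Sum>m\<le>N. p ^ (tri m + N) * gb p N m * x ^ Suc m * y ^ (N - m))"
  proof -
    have "p ^ tri (Suc m) * (p ^ (N - m) * gb p N m) = p ^ (tri m + N) * gb p N m" if "m \<le> N" for m
    proof -
      have "tri (Suc m) + (N - m) = tri m + N" using that by simp
      then show ?thesis by (metis mult.assoc power_add)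
    qed
    then show ?thesis
      by (auto simp: sum.distrib[symmetric] distrib_left distrib_right intro!: sum.cong)
  qed
  finally show ?case using L by (simp add: add.assoc)
qed

definition Ap :: "'a::comm_ring_1 \<Rightarrow> nat \<Rightarrow> 'a" where
  "Ap p k = (\<Prod>j\<in>{1..k}. 1 - p ^ j)"

lemma Ap_0[simp]: "Ap p 0 = 1" by (simp add: Ap_def)
lemma Ap_Suc: "Ap p (Suc k) = Ap p k * (1 - p ^ Suc k)"
  unfolding Ap_def by (simp add: prod.nat_ivl_Suc' mult.commute)

theorem gb_prod: "m \<le> N \<Longrightarrow> gb p N m * Ap p m * Ap p (N - m) = Ap p N"
proof (induction N arbitrary: m)
  case 0 then show ?case by simp
next
  case (Suc N)
  show ?case
  proof (cases m)
    case 0 then show ?thesis by simp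
  next
    case (Suc k)
    show ?thesis
    proof (cases "k = N")
      case True
      then show ?thesis using Suc by (simp add: gb_zero gb_diag)
    next
      case False
      then have kN: "k < N" using Suc \<open>m \<le> Suc N\<close> by simp
      define d where "d = N - Suc k"
      have Nk: "N - k = Suc d" using kN d_def by simp
      have IH1: "gb p N (Suc k) * Ap p (Suc k) * Ap p d = Ap p N"
        using Suc.IH[of "Suc k"] kN d_def by simp
      have IH2: "gb p N k * Ap p k * Ap p (Suc d) = Ap p N"
        using Suc.IH[of k] kN Nk by simp
      have e: "Suc d + Suc k = Suc N" using Nk kN by simp
      have "gb p (Suc N) m * Ap p m * Ap p (Suc N - m)
          = (gb p N (Suc k) + p ^ Suc d * gb p N k) * Ap p (Suc k) * Ap p (Suc d)"
        using Suc Nk by simp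
      also have "\<dots> = (gb p N (Suc k) * Ap p (Suc k) * Ap p d) * (1 - p ^ Suc d)
          + p ^ Suc d * (gb p N k * Ap p k * Ap p (Suc d)) * (1 - p ^ Suc k)"
        by (simp add: Ap_Suc algebra_simps)
      also have "\<dots> = Ap p N * (1 - p ^ Suc d) + p ^ Suc d * Ap p N * (1 - p ^ Suc k)"
        using IH1 IH2 by simp
      also have "\<dots> = Ap p N * (1 - p ^ (Suc d + Suc k))"
        by (simp add: power_add algebra_simps)
      also have "\<dots> = Ap p (Suc N)" using e by (simp add: Ap_Suc)
      finally show ?thesis .
    qed
  qed
qed

lemma prod_lessThan_add: "(\<Prod>j<a+b::nat. f j) = (\<Prod>j<a. f j) * (\<Prod>j<b. f (a + j))"
  by (induction b) (simp_all add: mult.assoc)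

definition U :: "rat \<Rightarrow> nat \<Rightarrow> nat \<Rightarrow> rat fps" where
  "U e s n = (\<Prod>j<n. 1 + fps_const e * fps_X ^ (s * (2 * j + 1)))"

definition dd :: "nat \<Rightarrow> nat \<Rightarrow> nat" where
  "dd n m = (if m \<le> n then n - m else m - n)"

lemma sum_odd: "(\<Sum>j<n. s * (2 * j + 1)) = s * n * (n::nat)"
  by (induction n) (auto simp: algebra_simps)

lemma jtp_lhs:
  assumes e: "e * e = 1"
  shows "(\<Prod>j<2*n. fps_X ^ (2*s*n) + (fps_const e * fps_X ^ s) * (fps_X ^ (2*s)) ^ j)
       = fps_const (e ^ n) * fps_X ^ (3*s*n*n) * U e s n ^ 2"
proof -
  define f where "f j = fps_X ^ (2*s*n) + fps_const e * fps_X ^ (s * (2 * j + 1))" for j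
  have ff: "fps_X ^ (2*s*n) + (fps_const e * fps_X ^ s) * (fps_X ^ (2*s)) ^ j = f j" for j
  proof -
    have "(fps_const e * fps_X ^ s) * (fps_X ^ (2*s)) ^ j = fps_const e * (fps_X ^ s * fps_X ^ (2*s*j))"
      by (simp only: power_mult mult.assoc)
    also have "fps_X ^ s * fps_X ^ (2*s*j) = (fps_X::rat fps) ^ (s * (2 * j + 1))"
      by (simp only: power_add[symmetric]) (simp add: algebra_simps)
    finally show ?thesis by (simp add: f_def)
  qed
  have ee: "fps_const e * fps_const e = (1::rat fps)" using e by simp
  define g where "g i = 1 + fps_const e * fps_X ^ (s * (2 * i + 1))" for i
  have A: "f j = fps_const e * fps_X ^ (s * (2 * j + 1)) * g (n - Suc j)" if "j < n" for j
  proof -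
    have ex: "s * (2 * j + 1) + s * (2 * (n - Suc j) + 1) = 2*s*n" using that
    proof -
      have "2 * j + 1 + (2 * (n - Suc j) + 1) = 2 * n" using that by simp
      then show ?thesis by (metis add_mult_distrib2 mult.assoc mult.commute)
    qed
    have "fps_const e * fps_X ^ (s * (2 * j + 1)) * g (n - Suc j)
       = fps_const e * fps_X ^ (s * (2 * j + 1)) + (fps_const e * fps_const e) * fps_X ^ (s * (2 * j + 1) + s * (2 * (n - Suc j) + 1))"
      unfolding g_def distrib_left power_add by (simp only: mult_ac mult_1_right mult_1_left)
    also have "\<dots> = f j" unfolding ee ex f_def by simp
    finally show ?thesis by simp
  qed
  have PA: "(\<Prod>j<n. f j) = fps_const (e ^ n) * fps_X ^ (s*n*n) * U e s n"
  proof -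
    have "(\<Prod>j<n. f j) = (\<Prod>j<n. fps_const e * fps_X ^ (s * (2 * j + 1)) * g (n - Suc j))"
      using A by (intro prod.cong) auto
    also have "\<dots> = (\<Prod>j<n. fps_const e) * (\<Prod>j<n. fps_X ^ (s * (2 * j + 1))) * (\<Prod>j<n. g (n - Suc j))"
      by (simp add: prod.distrib)
    also have "(\<Prod>j<n. g (n - Suc j)) = (\<Prod>j<n. g j)"
      by (rule prod.nat_diff_reindex)
    also have "(\<Prod>j<n. g j) = U e s n" by (simp add: U_def g_def)
    also have "(\<Prod>j<n. fps_X ^ (s * (2 * j + 1))) = (fps_X::rat fps) ^ (s*n*n)"
      unfolding power_sum[symmetric] sum_odd ..
    also have "(\<Prod>j<n. fps_const e) = fps_const (e ^ n)" by (simp add: fps_const_power)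
    finally show ?thesis .
  qed
  have PB: "(\<Prod>j<n. f (n + j)) = fps_X ^ (2*s*n*n) * U e s n"
  proof -
    have "f (n + j) = fps_X ^ (2*s*n) * g j" for j
    proof -
      have "s * (2 * (n + j) + 1) = 2*s*n + s * (2 * j + 1)" by (simp add: algebra_simps)
      then show ?thesis by (simp add: f_def g_def power_add algebra_simps)
    qed
    then have "(\<Prod>j<n. f (n + j)) = (\<Prod>j<n. fps_X ^ (2*s*n)) * (\<Prod>j<n. g j)"
      by (simp add: prod.distrib)
    also have "\<dots> = fps_X ^ (2*s*n*n) * U e s n"
      by (simp add: U_def g_def power_mult[symmetric])
    finally show ?thesis .
  qed
  have "(\<Prod>j<2*n. fps_X ^ (2*s*n) + (fps_const e * fps_X ^ s) * (fps_X ^ (2*s)) ^ j) = (\<Prod>j<n+n. f j)"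
  proof -
    have "2*n = n+n" by simp
    then show ?thesis by (simp only: ff)
  qed
  also have "\<dots> = (\<Prod>j<n. f j) * (\<Prod>j<n. f (n + j))" by (rule prod_lessThan_add)
  also have "\<dots> = fps_const (e ^ n) * fps_X ^ (s*n*n + 2*s*n*n) * U e s n ^ 2"
    unfolding PA PB power_add[of "fps_X::rat fps" "s*n*n"] power2_eq_square by (simp only: mult_ac)
  also have "s*n*n + 2*s*n*n = 3*s*n*n" by simp
  finally show ?thesis .
qed

lemma dd_exp: assumes "m \<le> 2*n" shows "m * m + 2*n*(2*n - m) = 3*n*n + dd n m * dd n m"
proof (cases "m \<le> n")
  case True
  then obtain D where n: "n = m + D" by (metis le_add_diff_inverse)
  have "2*n - m = m + 2*D" using n by simp
  then show ?thesis using True n by (simp add: dd_def algebra_simps)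
next
  case False
  then obtain D where m: "m = n + D" by (metis le_add_diff_inverse nat_le_linear)
  with assms obtain r where n: "n = D + r" by (metis add_le_cancel_left le_add_diff_inverse mult_2)
  have "2*n - m = r" using n m by simp
  then show ?thesis using False m n by (simp add: dd_def algebra_simps)
qed

lemma jtp_rhs_term:
  assumes "m \<le> 2*n"
  shows "(fps_X ^ (2*s)) ^ tri m * g * (fps_const e * fps_X ^ s) ^ m * (fps_X ^ (2*s*n)) ^ (2*n - m)
       = fps_X ^ (3*s*n*n) * (fps_const (e ^ m) * fps_X ^ (s * (dd n m * dd n m)) * (g::rat fps))"
proof -
  have ex: "2*s*tri m + s*m + 2*s*n*(2*n-m) = 3*s*n*n + s * (dd n m * dd n m)"
  proof -
    have "2*s*tri m + s*m + 2*s*n*(2*n-m) = s * ((2 * tri m + m) + 2*n*(2*n-m))" by (simp add: algebra_simps)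
    also have "\<dots> = s * (3*n*n + dd n m * dd n m)" unfolding tri_sq dd_exp[OF assms] ..
    finally show ?thesis by (simp add: algebra_simps)
  qed
  have "(fps_X ^ (2*s)) ^ tri m * g * (fps_const e * fps_X ^ s) ^ m * (fps_X ^ (2*s*n)) ^ (2*n - m)
      = fps_const (e ^ m) * g * fps_X ^ (2*s*tri m + s*m + 2*s*n*(2*n-m))"
  proof -
    have 1: "(fps_X ^ (2*s)) ^ tri m = (fps_X::rat fps) ^ (2*s*tri m)" by (simp only: power_mult)
    have 2: "(fps_const e * fps_X ^ s) ^ m = fps_const (e ^ m) * (fps_X::rat fps) ^ (s*m)"
      by (simp only: power_mult_distrib power_mult fps_const_power)
    have 3: "(fps_X ^ (2*s*n)) ^ (2*n - m) = (fps_X::rat fps) ^ (2*s*n*(2*n-m))" by (simp only: power_mult)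
    show ?thesis unfolding 1 2 3 power_add by (simp only: mult_ac)
  qed
  also have "\<dots> = fps_X ^ (3*s*n*n) * (fps_const (e ^ m) * fps_X ^ (s * (dd n m * dd n m)) * g)"
    unfolding ex power_add by (simp only: mult_ac)
  finally show ?thesis .
qed

lemma X_pow_cancel: "fps_X ^ k * a = fps_X ^ k * (b :: rat fps) \<Longrightarrow> a = b"
proof (intro fps_ext)
  fix i assume "fps_X ^ k * a = fps_X ^ k * b"
  then have "(fps_X ^ k * a) $ (i + k) = (fps_X ^ k * b) $ (i + k)" by simp
  then show "a $ i = b $ i" by (simp add: fps_X_power_mult_nth)
qed

theorem jtp_finite:
  assumes e: "e * e = 1"
  shows "U e s n ^ 2 = (\<Sum>m\<le>2*n. fps_const (e ^ dd n m) * fps_X ^ (s * (dd n m * dd n m)) * gb (fps_X ^ (2*s)) (2*n) m)"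
proof -
  let ?G = "\<lambda>m. gb ((fps_X::rat fps) ^ (2*s)) (2*n) m"
  have "fps_X ^ (3*s*n*n) * (fps_const (e ^ n) * U e s n ^ 2)
      = fps_X ^ (3*s*n*n) * (\<Sum>m\<le>2*n. fps_const (e ^ m) * fps_X ^ (s * (dd n m * dd n m)) * ?G m)"
  proof -
    have "fps_X ^ (3*s*n*n) * (fps_const (e ^ n) * U e s n ^ 2)
       = (\<Prod>j<2*n. fps_X ^ (2*s*n) + (fps_const e * fps_X ^ s) * (fps_X ^ (2*s)) ^ j)"
      unfolding jtp_lhs[OF e] by (simp only: mult_ac)
    also have "\<dots> = (\<Sum>m\<le>2*n. (fps_X ^ (2*s)) ^ tri m * ?G m * (fps_const e * fps_X ^ s) ^ m * (fps_X ^ (2*s*n)) ^ (2*n - m))"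
      by (rule qbinom)
    also have "\<dots> = (\<Sum>m\<le>2*n. fps_X ^ (3*s*n*n) * (fps_const (e ^ m) * fps_X ^ (s * (dd n m * dd n m)) * ?G m))"
      by (intro sum.cong refl jtp_rhs_term) simp
    finally show ?thesis by (simp add: sum_distrib_left)
  qed
  then have H: "fps_const (e ^ n) * U e s n ^ 2 = (\<Sum>m\<le>2*n. fps_const (e ^ m) * fps_X ^ (s * (dd n m * dd n m)) * ?G m)"
    by (rule X_pow_cancel)
  have en: "e ^ n * e ^ n = 1" using e by (metis power_mult_distrib power_one)
  have emn: "e ^ n * e ^ m = e ^ dd n m" for m
  proof (cases "m \<le> n")
    case True
    then have "e ^ n = e ^ (n - m) * e ^ m" by (metis le_add_diff_inverse2 power_add)
    then have "e ^ n * e ^ m = e ^ (n - m) * (e * e) ^ m"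
      by (simp add: power_mult_distrib mult.assoc)
    then show ?thesis using True e by (simp add: dd_def)
  next
    case False
    then have "e ^ m = e ^ (m - n) * e ^ n" by (metis le_add_diff_inverse2 nat_le_linear power_add)
    then have "e ^ n * e ^ m = e ^ (m - n) * (e * e) ^ n"
      by (simp add: power_mult_distrib mult_ac)
    then show ?thesis using False e by (simp add: dd_def)
  qed
  have "U e s n ^ 2 = fps_const (e ^ n) * (fps_const (e ^ n) * U e s n ^ 2)"
  proof -
    have "fps_const (e ^ n) * fps_const (e ^ n) = (1::rat fps)"
      by (simp only: fps_const_mult en fps_const_1_eq_1)
    then show ?thesis by (metis mult.assoc mult_1_left)
  qed
  also have "\<dots> = (\<Sum>m\<le>2*n. fps_const (e ^ n * e ^ m) * fps_X ^ (s * (dd n m * dd n m)) * ?G m)"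
    unfolding H by (simp add: sum_distrib_left mult.assoc fps_const_mult[symmetric] del: fps_const_mult)
  finally show ?thesis unfolding emn .
qed

definition th :: "rat \<Rightarrow> nat \<Rightarrow> rat fps" where
  "th e s = Abs_fps (\<lambda>t. (if t = 0 then 1 else 0)
      + 2 * (\<Sum>d<t. e ^ Suc d * (if s * (Suc d * Suc d) = t then 1 else 0)))"

lemma sum_lessThan_add: "(\<Sum>j<a+b::nat. f j) = (\<Sum>j<a. f j) + (\<Sum>j<b. f (a + j))"
  by (induction b) (simp_all add: add.assoc)

lemma sym_sum:
  fixes f :: "nat \<Rightarrow> 'a::comm_monoid_add"
  shows "(\<Sum>m\<le>2*n. f (dd n m)) = f 0 + (\<Sum>j<n. f (Suc j)) + (\<Sum>j<n. f (Suc j))"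
proof -
  have "(\<Sum>m\<le>2*n. f (dd n m)) = (\<Sum>m<n + Suc n. f (dd n m))"
  proof -
    have "{..2*n} = {..<n + Suc n}" by auto
    then show ?thesis by simp
  qed
  also have "\<dots> = (\<Sum>m<n. f (dd n m)) + (\<Sum>j<Suc n. f (dd n (n + j)))"
    by (rule sum_lessThan_add)
  also have "(\<Sum>j<Suc n. f (dd n (n + j))) = f 0 + (\<Sum>j<n. f (Suc j))"
    by (subst sum.lessThan_Suc_shift) (simp add: dd_def)
  also have "(\<Sum>m<n. f (dd n m)) = (\<Sum>m<n. f (n - m))"
    by (intro sum.cong) (auto simp: dd_def)
  also have "\<dots> = (\<Sum>j<n. f (Suc j))"
  proof -
    have "(\<Sum>i<n. (\<lambda>m. f (n - m)) (n - Suc i)) = (\<Sum>i<n. (\<lambda>m. f (n - m)) i)"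
      by (rule sum.nat_diff_reindex)
    moreover have "(\<Sum>i<n. (\<lambda>m. f (n - m)) (n - Suc i)) = (\<Sum>j<n. f (Suc j))"
      by (intro sum.cong) (auto simp: Suc_diff_Suc)
    ultimately show ?thesis by simp
  qed
  finally show ?thesis by (simp add: add_ac)
qed

lemma Ap_Pf: "Ap (fps_X ^ m) k = Pf m k"
  unfolding Ap_def Pf_def by (simp add: power_mult[symmetric] mult.commute)

lemma Pf_unit_teq:
  assumes "m \<ge> 1"
  shows "eta_fps m * inverse (eta_fps m) = 1"
  by (simp add: inverse_mult_eq_1')

lemma jtp_teq:
  assumes e: "e * e = 1" and s: "s \<ge> 1"
  shows "teq T (eta_fps (2*s) * U e s (2*T+1) ^ 2) (th e s)"
proof -
  define n where "n = 2*T+1"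
  define E where "E = eta_fps (2*s)"
  define g where "g m = gb ((fps_X::rat fps) ^ (2*s)) (2*n) m" for m
  define h where "h d = (if d \<le> T then fps_const (e ^ d) * fps_X ^ (s * (d * d)) else (0::rat fps))" for d
  have s2: "2*s \<ge> 1" using s by simp
  have Einv: "E * inverse E = 1" by (simp add: E_def inverse_mult_eq_1')
  have key: "teq T (E * (fps_const (e ^ dd n m) * fps_X ^ (s * (dd n m * dd n m)) * g m)) (h (dd n m))"
    if m: "m \<le> 2*n" for m
  proof (cases "dd n m \<le> T")
    case True
    have m1: "T \<le> m" and m2: "T \<le> 2*n - m" using True m unfolding dd_def n_def by (auto split: if_splits)
    have gp: "g m * Pf (2*s) m * Pf (2*s) (2*n - m) = Pf (2*s) (2*n)"
      using gb_prod[OF m, of "(fps_X::rat fps) ^ (2*s)"] unfolding Ap_Pf g_def .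
    have a1: "teq T (Pf (2*s) m) E" using eta_teq[OF s2 m1] unfolding E_def by (rule teq_sym)
    have a2: "teq T (Pf (2*s) (2*n - m)) E" using eta_teq[OF s2 m2] unfolding E_def by (rule teq_sym)
    have "teq T (g m * Pf (2*s) m * Pf (2*s) (2*n - m)) (g m * E * E)"
      by (intro teq_mult teq_refl a1 a2)
    moreover have "teq T (Pf (2*s) (2*n)) E"
      using eta_teq[OF s2, of T "2*n"] unfolding E_def n_def by (auto intro: teq_sym)
    ultimately have "teq T (g m * E * E) E" using gp by (metis teq_sym teq_trans)
    then have "teq T (g m * E * E * inverse E) (E * inverse E)" by (rule teq_mult) simp
    then have gE: "teq T (g m * E) 1" using Einv by (simp add: mult.assoc)
    have "teq T ((fps_const (e ^ dd n m) * fps_X ^ (s * (dd n m * dd n m))) * (g m * E))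
                ((fps_const (e ^ dd n m) * fps_X ^ (s * (dd n m * dd n m))) * 1)"
      by (rule teq_mult[OF teq_refl gE])
    then show ?thesis using True by (simp add: h_def mult_ac)
  next
    case False
    have "T < s * (dd n m * dd n m)"
    proof -
      have "dd n m \<le> dd n m * dd n m" by simp
      also have "\<dots> \<le> s * (dd n m * dd n m)" using s by simp
      finally have "dd n m \<le> s * (dd n m * dd n m)" .
      then show ?thesis using False by linarith
    qed
    then have "teq T (fps_X ^ (s * (dd n m * dd n m)) * (E * fps_const (e ^ dd n m) * g m)) 0"
      by (rule teq_Xpow_zero)
    then show ?thesis using False by (simp add: h_def mult_ac)
  qed
  have "E * U e s n ^ 2 = (\<Sum>m\<le>2*n. E * (fps_const (e ^ dd n m) * fps_X ^ (s * (dd n m * dd n m)) * g m))"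
    unfolding jtp_finite[OF e] g_def by (simp add: sum_distrib_left)
  then have T1: "teq T (E * U e s n ^ 2) (\<Sum>m\<le>2*n. h (dd n m))"
    using key by (auto intro: teq_sum)
  have T2: "teq T (\<Sum>m\<le>2*n. h (dd n m)) (th e s)"
    unfolding teq_def
  proof (intro allI impI)
    fix t assume t: "t \<le> T"
    have "(\<Sum>m\<le>2*n. h (dd n m)) $ t = h 0 $ t + (\<Sum>j<n. h (Suc j) $ t) + (\<Sum>j<n. h (Suc j) $ t)"
      unfolding sym_sum fps_add_nth fps_sum_nth ..
    also have "h 0 $ t = (if t = 0 then 1 else 0)" by (simp add: h_def)
    also have "(\<Sum>j<n. h (Suc j) $ t) = (\<Sum>d<t. e ^ Suc d * (if s * (Suc d * Suc d) = t then 1 else 0))"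
    proof (rule sum.mono_neutral_cong_right)
      show "finite {..<n}" by simp
      show "{..<t} \<subseteq> {..<n}" using t n_def by auto
      show "\<forall>j\<in>{..<n} - {..<t}. h (Suc j) $ t = 0"
      proof
        fix j assume "j \<in> {..<n} - {..<t}"
        then have "t \<le> j" by simp
        moreover have "Suc j \<le> s * (Suc j * Suc j)"
          using s by (metis le_add1 mult_le_mono1 mult_1 mult_Suc_right order_trans)
        ultimately show "h (Suc j) $ t = 0" by (auto simp: h_def)
      qed
      show "h (Suc j) $ t = e ^ Suc j * (if s * (Suc j * Suc j) = t then 1 else 0)" if "j \<in> {..<t}" for j
        using that t by (auto simp: h_def)
    qed
    finally show "(\<Sum>m\<le>2*n. h (dd n m)) $ t = th e s $ t" by (simp add: th_def)
  qed
  show ?thesis using teq_trans[OF T1 T2] unfolding E_def n_def .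
qed

definition Od :: "nat \<Rightarrow> nat \<Rightarrow> rat fps" where
  "Od m n = (\<Prod>j<n. 1 - fps_X ^ (m * (2 * j + 1)))"

lemma Pf_split: "Pf m (2*n) = Od m n * Pf (2*m) n"
proof (induction n)
  case 0 then show ?case by (simp add: Od_def)
next
  case (Suc n)
  have "Pf m (2 * Suc n) = Pf m (2*n) * (1 - fps_X ^ (m * (2 * n + 1))) * (1 - fps_X ^ (Suc n * (2 * m)))"
  proof -
    have "2 * Suc n = Suc (Suc (2*n))" by simp
    moreover have "Suc (2*n) * m = m * (2 * n + 1)" "Suc (Suc (2*n)) * m = Suc n * (2 * m)" by (simp_all add: algebra_simps)
    ultimately show ?thesis by (simp only: Pf_Suc)
  qed
  also have "\<dots> = Od m (Suc n) * Pf (2*m) (Suc n)"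
    unfolding Suc Pf_Suc Od_def by (simp add: mult_ac)
  finally show ?case .
qed

lemma Od_0: "m \<ge> 1 \<Longrightarrow> Od m n $ 0 = 1"
  unfolding Od_def by (induction n) auto

lemma Pf_inv: "m \<ge> 1 \<Longrightarrow> Pf m K * inverse (Pf m K) = 1"
  by (simp add: inverse_mult_eq_1')

lemma eta_inv: "eta_fps m * inverse (eta_fps m) = 1"
  by (simp add: inverse_mult_eq_1')

lemma Od_teq:
  assumes m: "m \<ge> 1" and n: "T \<le> n"
  shows "teq T (Od m n) (eta_fps m * inverse (eta_fps (2*m)))"
proof -
  have m2: "2*m \<ge> 1" using m by simp
  have "Od m n = Pf m (2*n) * inverse (Pf (2*m) n)"
    using Pf_split[of m n] Pf_inv[OF m2, of n] by (metis mult.assoc mult_1_right)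
  moreover have "teq T (Pf m (2*n) * inverse (Pf (2*m) n)) (eta_fps m * inverse (eta_fps (2*m)))"
  proof (rule teq_mult)
    show "teq T (Pf m (2*n)) (eta_fps m)" using eta_teq[OF m, of T "2*n"] n by (auto intro: teq_sym)
    show "teq T (inverse (Pf (2*m) n)) (inverse (eta_fps (2*m)))"
      using eta_teq[OF m2 n] Pf_nth_0[OF m2, of n] by (intro teq_inverse) (auto intro: teq_sym)
  qed
  ultimately show ?thesis by simp
qed

theorem th_neg:
  assumes s: "s \<ge> 1"
  shows "th (-1) s = eta_fps s ^ 2 * inverse (eta_fps (2*s))"
proof (rule teq_eq)
  fix T
  have U: "U (-1) s n = Od s n" for n
  proof -
    have "fps_const (-1::rat) = -1" by (metis fps_const_1_eq_1 fps_const_neg)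
    then show ?thesis unfolding U_def Od_def by simp
  qed
  have "teq T (eta_fps (2*s) * U (-1) s (2*T+1) ^ 2) (eta_fps (2*s) * (eta_fps s * inverse (eta_fps (2*s))) ^ 2)"
    unfolding U by (intro teq_mult teq_power teq_refl Od_teq s) simp
  moreover have "eta_fps (2*s) * (eta_fps s * inverse (eta_fps (2*s))) ^ 2 = eta_fps s ^ 2 * inverse (eta_fps (2*s))"
  proof -
    have "eta_fps (2*s) * (eta_fps s * inverse (eta_fps (2*s))) ^ 2
        = eta_fps s ^ 2 * inverse (eta_fps (2*s)) * (eta_fps (2*s) * inverse (eta_fps (2*s)))"
      by (simp only: power2_eq_square mult_ac)
    then show ?thesis by (simp only: eta_inv mult_1_right)
  qed
  ultimately have "teq T (eta_fps (2*s) * U (-1) s (2*T+1) ^ 2) (eta_fps s ^ 2 * inverse (eta_fps (2*s)))" by simp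
  then show "teq T (th (-1) s) (eta_fps s ^ 2 * inverse (eta_fps (2*s)))"
    using teq_trans[OF teq_sym[OF jtp_teq[of "-1" s T]]] s by simp
qed

lemma sq_diff: "(1 + a) * (1 - a) = 1 - (a::'a::comm_ring_1) ^ 2"
  by (simp add: algebra_simps power2_eq_square)

theorem th_pos:
  "th 1 1 = eta_fps 2 ^ 5 * inverse (eta_fps 4) ^ 2 * inverse (eta_fps 1) ^ 2"
proof (rule teq_eq)
  fix T
  define n :: nat where "n = 2*T+1"
  have Un: "U 1 1 n = Od 2 n * inverse (Od 1 n)"
  proof -
    have "U 1 1 n * Od 1 n = Od 2 n"
    proof -
      have "U 1 1 n * Od 1 n = (\<Prod>j<n. (1 + fps_X ^ (2 * j + 1)) * (1 - fps_X ^ (2 * j + 1)))"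
        unfolding U_def Od_def prod.distrib by simp
      also have "\<dots> = Od 2 n"
        unfolding Od_def
      proof (intro prod.cong refl)
        fix j
        have "(1 + fps_X ^ (2 * j + 1)) * (1 - fps_X ^ (2 * j + 1)) = 1 - ((fps_X::rat fps) ^ (2 * j + 1)) ^ 2"
          by (rule sq_diff)
        also have "(fps_X ^ (2 * j + 1)) ^ 2 = (fps_X::rat fps) ^ (2 * (2 * j + 1))"
          by (simp only: power_mult[symmetric] mult.commute)
        finally show "(1 + fps_X ^ (2 * j + 1)) * (1 - fps_X ^ (2 * j + 1)) = (1 - fps_X ^ (2 * (2 * j + 1)) :: rat fps)" .
      qed
      finally show ?thesis .
    qed
    moreover have "Od 1 n * inverse (Od 1 n) = 1" using Od_0[of 1 n] by (simp add: inverse_mult_eq_1')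
    ultimately show ?thesis by (metis mult.assoc mult_1_right)
  qed
  define Q where "Q = eta_fps 2 * inverse (eta_fps 4) * inverse (eta_fps 1 * inverse (eta_fps 2))"
  have TU: "teq T (U 1 1 n) Q"
    unfolding Un Q_def
  proof (rule teq_mult)
    show "teq T (Od 2 n) (eta_fps 2 * inverse (eta_fps 4))"
      using Od_teq[of 2 T n] n_def by simp
    show "teq T (inverse (Od 1 n)) (inverse (eta_fps 1 * inverse (eta_fps 2)))"
      using Od_teq[of 1 T n] n_def by (intro teq_inverse) (auto simp: Od_0)
  qed
  have QQ: "Q = eta_fps 2 ^ 2 * inverse (eta_fps 4) * inverse (eta_fps 1)"
  proof -
    have "inverse (eta_fps 1 * inverse (eta_fps 2)) = inverse (eta_fps 1) * eta_fps 2"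
      by (simp add: fps_inverse_mult)
    then show ?thesis unfolding Q_def by (simp only: power2_eq_square mult_ac)
  qed
  have p5: "(x::rat fps) ^ 5 = x * x * x * x * x" for x by (simp add: eval_nat_numeral)
  have R1: "eta_fps 2 * Q ^ 2 = eta_fps 2 ^ 5 * inverse (eta_fps 4) ^ 2 * inverse (eta_fps 1) ^ 2"
    unfolding QQ p5 power2_eq_square by (simp only: mult_ac)
  have R2: "teq T (eta_fps 2 * U 1 1 n ^ 2) (eta_fps 2 * Q ^ 2)"
    by (intro teq_mult teq_power teq_refl TU)
  have R3: "teq T (eta_fps (2*1) * U 1 1 n ^ 2) (th 1 1)"
    unfolding n_def by (rule jtp_teq) simp_all
  then have R3': "teq T (eta_fps 2 * U 1 1 n ^ 2) (th 1 1)" by simp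
  show "teq T (th 1 1) (eta_fps 2 ^ 5 * inverse (eta_fps 4) ^ 2 * inverse (eta_fps 1) ^ 2)"
    using teq_trans[OF teq_sym[OF R3'] R2] unfolding R1 .
qed

definition Zp :: "rat fps \<Rightarrow> bool" where "Zp a \<longleftrightarrow> (\<forall>t. a $ t \<in> \<int>)"
definition Mm :: "int \<Rightarrow> rat fps \<Rightarrow> bool" where "Mm M a \<longleftrightarrow> (\<forall>t. a $ t / of_int M \<in> \<int>)"
definition Sp :: "nat \<Rightarrow> rat fps \<Rightarrow> bool" where "Sp d a \<longleftrightarrow> (\<forall>t. a $ t \<noteq> 0 \<longrightarrow> d dvd t)"

lemma Zp_0[simp]: "Zp 0" and Zp_1[simp]: "Zp 1" and Zp_Xp[simp]: "Zp (fps_X ^ k)"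
  by (auto simp: Zp_def)
lemma Zp_X[simp]: "Zp fps_X" by (auto simp: Zp_def fps_X_def)
lemma Zp_const: "c \<in> \<int> \<Longrightarrow> Zp (fps_const c)" by (auto simp: Zp_def)
lemma Zp_add: "Zp a \<Longrightarrow> Zp b \<Longrightarrow> Zp (a + b)" by (auto simp: Zp_def)
lemma Zp_diff: "Zp a \<Longrightarrow> Zp b \<Longrightarrow> Zp (a - b)" by (auto simp: Zp_def)
lemma Zp_mult: "Zp a \<Longrightarrow> Zp b \<Longrightarrow> Zp (a * b)"
  unfolding Zp_def fps_mult_nth by (auto intro!: Ints_sum Ints_mult)
lemma Zp_power: "Zp a \<Longrightarrow> Zp (a ^ k)"
  by (induction k) (auto intro: Zp_mult)

lemma Zp_inverse:
  assumes a: "Zp a" and a0: "a $ 0 = 1"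
  shows "Zp (inverse a)"
  unfolding Zp_def
proof (intro allI)
  fix t show "inverse a $ t \<in> \<int>"
  proof (induction t rule: less_induct)
    case (less t)
    show ?case
    proof (cases t)
      case 0 then show ?thesis using a0 by simp
    next
      case (Suc u)
      have "(a * inverse a) $ t = 0" using a0 Suc by (simp add: inverse_mult_eq_1')
      then have "(\<Sum>i=0..t. a $ i * inverse a $ (t - i)) = 0" by (simp add: fps_mult_nth)
      then have "a $ 0 * inverse a $ t + (\<Sum>i=Suc 0..t. a $ i * inverse a $ (t - i)) = 0"
        by (simp add: sum.atLeast_Suc_atMost)
      then have "inverse a $ t = - (\<Sum>i=Suc 0..t. a $ i * inverse a $ (t - i))"
        using a0 by (simp add: eq_neg_iff_add_eq_0)
      moreover have "(\<Sum>i=Suc 0..t. a $ i * inverse a $ (t - i)) \<in> \<int>"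
        using a less.IH Suc unfolding Zp_def by (intro Ints_sum Ints_mult) auto
      ultimately show ?thesis by simp
    qed
  qed
qed

lemma Zp_Pf: "Zp (Pf m K)"
  by (induction K) (auto simp: Pf_Suc intro!: Zp_mult Zp_diff)
lemma Zp_eta: "Zp (eta_fps m)"
  using Zp_Pf unfolding Zp_def eta_nth by auto
lemma Zp_inv_eta: "Zp (inverse (eta_fps m))"
  by (rule Zp_inverse[OF Zp_eta]) simp

lemma Mm_add: "Mm M a \<Longrightarrow> Mm M b \<Longrightarrow> Mm M (a + b)"
  unfolding Mm_def by (auto simp: add_divide_distrib)
lemma Mm_diff: "Mm M a \<Longrightarrow> Mm M b \<Longrightarrow> Mm M (a - b)"
  unfolding Mm_def by (auto simp: diff_divide_distrib)
lemma Mm_0[simp]: "Mm M 0" by (simp add: Mm_def)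
lemma Mm_mult: "Mm M a \<Longrightarrow> Zp b \<Longrightarrow> Mm M (a * b)"
proof -
  assume a: "Mm M a" and b: "Zp b"
  show ?thesis unfolding Mm_def
  proof
    fix t
    have "(a * b) $ t / of_int M = (\<Sum>i=0..t. (a $ i / of_int M) * b $ (t - i))"
      by (simp add: fps_mult_nth sum_divide_distrib)
    also have "\<dots> \<in> \<int>" using a b unfolding Mm_def Zp_def by (intro Ints_sum Ints_mult) auto
    finally show "(a * b) $ t / of_int M \<in> \<int>" .
  qed
qed
lemma Mm_mult_left: "Zp b \<Longrightarrow> Mm M a \<Longrightarrow> Mm M (b * a)"
  using Mm_mult[of M a b] by (simp add: mult.commute)
lemma Mm_mult2: "Mm M a \<Longrightarrow> Mm N b \<Longrightarrow> Mm (M * N) (a * b)"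
proof -
  assume a: "Mm M a" and b: "Mm N b"
  show ?thesis unfolding Mm_def
  proof
    fix t
    have "(a * b) $ t / of_int (M * N) = (\<Sum>i=0..t. (a $ i / of_int M) * (b $ (t - i) / of_int N))"
      by (simp add: fps_mult_nth sum_divide_distrib)
    also have "\<dots> \<in> \<int>" using a b unfolding Mm_def by (intro Ints_sum Ints_mult) auto
    finally show "(a * b) $ t / of_int (M * N) \<in> \<int>" .
  qed
qed
lemma Mm_Zp: "M \<noteq> 0 \<Longrightarrow> Mm M a \<Longrightarrow> Zp a"
  unfolding Mm_def Zp_def
proof (intro allI)
  fix t assume "M \<noteq> 0" "\<forall>t. a $ t / of_int M \<in> \<int>"
  then have "of_int M * (a $ t / of_int M) \<in> \<int>" by (intro Ints_mult) auto
  then show "a $ t \<in> \<int>" using \<open>M \<noteq> 0\<close> by simp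
qed
lemma Mm_const_mult: "Zp b \<Longrightarrow> Mm M (fps_const (of_int M) * b)"
  unfolding Mm_def Zp_def by (cases "M = 0") auto
lemma Mm_half: "Mm 2 a \<Longrightarrow> Zp (fps_const (1/2) * a)"
  unfolding Mm_def Zp_def by simp

lemma cong_mult:
  assumes "Mm M (a - b)" "Mm M (c - d)" "Zp b" "Zp c"
  shows "Mm M (a * c - b * d)"
proof -
  have "a * c - b * d = (a - b) * c + b * (c - d)" by (simp add: algebra_simps)
  then show ?thesis using Mm_add[OF Mm_mult[OF assms(1,4)] Mm_mult_left[OF assms(3,2)]] by simp
qed

lemma cong_power:
  assumes "Mm M (a - b)" "Zp a" "Zp b"
  shows "Mm M (a ^ k - b ^ k)"
proof (induction k)
  case 0 then show ?case by simp
next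
  case (Suc k)
  have "Mm M (a * a ^ k - b * b ^ k)"
    by (rule cong_mult[OF assms(1) Suc]) (auto intro: Zp_power assms)
  then show ?case by simp
qed

lemma cong_inverse:
  assumes "Mm M (a - b)" "Zp a" "Zp b" "a $ 0 = 1" "b $ 0 = 1"
  shows "Mm M (inverse a - inverse b)"
proof -
  have "inverse a - inverse b = inverse a * (b - a) * inverse b"
  proof -
    have "inverse a * (b - a) * inverse b = inverse a * (b * inverse b) - (inverse a * a) * inverse b"
      by (simp add: algebra_simps)
    also have "\<dots> = inverse a - inverse b" using assms(4,5) by (simp add: inverse_mult_eq_1 inverse_mult_eq_1')
    finally show ?thesis by simp
  qed
  moreover have "Mm M (b - a)" using Mm_diff[OF Mm_0 assms(1)] by simp
  ultimately show ?thesis using assms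
    by (metis Mm_mult Mm_mult_left Zp_inverse)
qed

lemma cong_sym: "Mm M (a - b) \<Longrightarrow> Mm M (b - a)"
  using Mm_diff[OF Mm_0] by fastforce
lemma cong_trans: "Mm M (a - b) \<Longrightarrow> Mm M (b - c) \<Longrightarrow> Mm M (a - c)"
  using Mm_add by fastforce

lemma cube_cong: "Mm 3 ((1 - fps_X ^ k) ^ 3 - (1 - fps_X ^ (3 * k)))"
proof -
  have "(1 - fps_X ^ k) ^ 3 - (1 - fps_X ^ (3 * k)) = fps_const (of_int 3) * (fps_X ^ (2 * k) - (fps_X::rat fps) ^ k)"
  proof -
    have "3 * k = k + k + k" "2 * k = k + k" by simp_all
    then have p: "(fps_X::rat fps) ^ (3 * k) = fps_X ^ k * fps_X ^ k * fps_X ^ k" "(fps_X::rat fps) ^ (2 * k) = fps_X ^ k * fps_X ^ k"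
      by (simp_all only: power_add)
    have c: "fps_const (of_int 3) = (3 :: rat fps)" by (simp add: numeral_fps_const)
    show ?thesis unfolding p c by (simp add: algebra_simps eval_nat_numeral)
  qed
  then show ?thesis by (simp only: Mm_const_mult Zp_diff Zp_Xp)
qed

lemma Pf_frob: "Mm 3 (Pf m K ^ 3 - Pf (3 * m) K)"
proof (induction K)
  case 0 then show ?case by simp
next
  case (Suc K)
  have e: "Suc K * (3 * m) = 3 * (Suc K * m)" by simp
  have "Mm 3 (Pf m K ^ 3 * (1 - fps_X ^ (Suc K * m)) ^ 3 - Pf (3 * m) K * (1 - fps_X ^ (3 * (Suc K * m))))"
    by (rule cong_mult[OF Suc cube_cong]) (intro Zp_Pf Zp_power Zp_diff Zp_1 Zp_Xp)+
  then show ?case unfolding Pf_Suc e by (simp add: power_mult_distrib)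
qed

lemma eta_frob:
  assumes m: "m \<ge> 1" shows "Mm 3 (eta_fps m ^ 3 - eta_fps (3 * m))"
  unfolding Mm_def
proof
  fix t
  have m3: "3 * m \<ge> 1" using m by simp
  have "teq t (eta_fps m ^ 3 - eta_fps (3 * m)) (Pf m t ^ 3 - Pf (3 * m) t)"
    by (intro teq_diff teq_power eta_teq m m3) simp_all
  then have "(eta_fps m ^ 3 - eta_fps (3 * m)) $ t = (Pf m t ^ 3 - Pf (3 * m) t) $ t"
    unfolding teq_def by simp
  then show "(eta_fps m ^ 3 - eta_fps (3 * m)) $ t / of_int 3 \<in> \<int>"
    using Pf_frob[of m t] unfolding Mm_def by metis
qed

lemma mult_nth_zero:
  fixes f g :: "rat fps"
  assumes "\<And>i. i \<le> t \<Longrightarrow> f $ i \<noteq> 0 \<Longrightarrow> g $ (t - i) \<noteq> 0 \<Longrightarrow> False"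
  shows "(f * g) $ t = 0"
  unfolding fps_mult_nth
proof (intro sum.neutral ballI)
  fix i assume "i \<in> {0..t}"
  then have "i \<le> t" by simp
  show "f $ i * g $ (t - i) = 0"
  proof (rule ccontr)
    assume "f $ i * g $ (t - i) \<noteq> 0"
    then have "f $ i \<noteq> 0" "g $ (t - i) \<noteq> 0" by auto
    then show False using assms[of i] \<open>i \<le> t\<close> by blast
  qed
qed

lemma Sp_mult: "Sp d a \<Longrightarrow> Sp d b \<Longrightarrow> Sp d (a * b)"
  unfolding Sp_def
proof (intro allI impI)
  fix t assume a: "\<forall>t. a $ t \<noteq> 0 \<longrightarrow> d dvd t" and b: "\<forall>t. b $ t \<noteq> 0 \<longrightarrow> d dvd t" and ab: "(a * b) $ t \<noteq> 0"
  show "d dvd t"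
  proof (rule ccontr)
    assume nd: "\<not> d dvd t"
    have "(a * b) $ t = 0"
    proof (rule mult_nth_zero)
      fix i assume "i \<le> t" "a $ i \<noteq> 0" "b $ (t - i) \<noteq> 0"
      then have "d dvd i" "d dvd (t - i)" using a b by auto
      then have "d dvd (i + (t - i))" by (rule dvd_add)
      then show False using nd \<open>i \<le> t\<close> by simp
    qed
    then show False using ab by simp
  qed
qed
lemma Sp_1[simp]: "Sp d 1" by (simp add: Sp_def)
lemma Sp_power: "Sp d a \<Longrightarrow> Sp d (a ^ k)"
  by (induction k) (auto intro: Sp_mult)

lemma Sp_inverse:
  assumes a: "Sp d a" and a0: "a $ 0 \<noteq> 0"
  shows "Sp d (inverse a)"
proof -
  define b where "b = Abs_fps (\<lambda>t. if d dvd t then inverse a $ t else 0)"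
  have "a * b = 1"
  proof (rule fps_ext)
    fix t
    show "(a * b) $ t = 1 $ t"
    proof (cases "d dvd t")
      case True
      have "(a * b) $ t = (\<Sum>i=0..t. a $ i * inverse a $ (t - i))"
        unfolding fps_mult_nth
      proof (intro sum.cong refl)
        fix i assume i: "i \<in> {0..t}"
        show "a $ i * b $ (t - i) = a $ i * inverse a $ (t - i)"
        proof (cases "a $ i = 0")
          case False
          then have "d dvd i" using a by (auto simp: Sp_def)
          then have "d dvd (t - i)" using True by (simp add: dvd_diff_nat)
          then show ?thesis by (simp add: b_def)
        qed simp
      qed
      also have "\<dots> = (a * inverse a) $ t" by (simp add: fps_mult_nth)
      also have "\<dots> = 1 $ t" using a0 by (simp add: inverse_mult_eq_1')
      finally show ?thesis .
    next
      case False
      then have t0: "t \<noteq> 0" by (metis dvd_0_right)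
      have "(a * b) $ t = 0"
      proof (rule mult_nth_zero)
        fix i assume i: "i \<le> t" "a $ i \<noteq> 0" "b $ (t - i) \<noteq> 0"
        then have "d dvd i" "d dvd (t - i)" using a by (auto simp: Sp_def b_def split: if_splits)
        then have "d dvd (i + (t - i))" by (rule dvd_add)
        then show False using False i by simp
      qed
      then show ?thesis using t0 by simp
    qed
  qed
  then have "inverse a = b" by (rule fps_inverse_unique)
  moreover have "Sp d b" unfolding Sp_def b_def by simp
  ultimately show ?thesis by simp
qed

lemma Sp_Pf: "d dvd m \<Longrightarrow> Sp d (Pf m K)"
proof (induction K)
  case 0 then show ?case by simp
next
  case (Suc K)
  have "Sp d (1 - fps_X ^ (Suc K * m))" using Suc.prems by (auto simp: Sp_def)
  then show ?case using Suc by (simp add: Pf_Suc Sp_mult)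
qed
lemma Sp_eta: "d dvd m \<Longrightarrow> Sp d (eta_fps m)"
  using Sp_Pf unfolding Sp_def eta_nth by metis
lemma Sp_inv_eta: "d dvd m \<Longrightarrow> Sp d (inverse (eta_fps m))"
  by (intro Sp_inverse Sp_eta) simp_all

lemma th_nth: "th e s $ t = (if t = 0 then 1 else 0) + 2 * (\<Sum>d<t. e ^ Suc d * (if s * (Suc d * Suc d) = t then 1 else 0))"
  by (simp add: th_def)

lemma th_S_Ints: "e \<in> \<int> \<Longrightarrow> (\<Sum>d<t. e ^ Suc d * (if s * (Suc d * Suc d) = t then 1 else 0)) \<in> \<int>"
  by (intro Ints_sum Ints_mult Ints_power) auto

lemma Zp_th: "e \<in> \<int> \<Longrightarrow> Zp (th e s)"
  unfolding Zp_def th_nth using th_S_Ints by (auto intro!: Ints_add Ints_mult)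

lemma th_0[simp]: "th e s $ 0 = 1" by (simp add: th_nth)

lemma th_mod2: "e \<in> \<int> \<Longrightarrow> Mm 2 (th e s - 1)"
  unfolding Mm_def using th_S_Ints by (auto simp: th_nth)

lemma th_supp: assumes "th e s $ t \<noteq> 0" shows "\<exists>k. t = s * (k * k)"
proof (cases "t = 0")
  case True then show ?thesis by auto
next
  case False
  then have "(\<Sum>d<t. e ^ Suc d * (if s * (Suc d * Suc d) = t then 1 else 0)) \<noteq> 0"
    using assms by (simp add: th_nth)
  then obtain d where "e ^ Suc d * (if s * (Suc d * Suc d) = t then 1 else 0) \<noteq> 0"
    by (meson sum.neutral)
  then have "s * (Suc d * Suc d) = t" by (auto split: if_splits)
  then show ?thesis by metis
qed

lemma sq9_all: "\<forall>r\<in>{..<9::nat}. r * r mod 9 \<in> {0, 1, 4, 7}"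
  by (simp add: lessThan_nat_numeral)

lemma sq_mod9: "(k::nat) * k mod 9 \<in> {0, 1, 4, 7}"
proof -
  have "k * k mod 9 = (k mod 9) * (k mod 9) mod 9" by (simp add: mod_mult_eq)
  moreover have "k mod 9 \<in> {..<9}" by simp
  ultimately show ?thesis using sq9_all by metis
qed

lemma sq3_all: "\<forall>r\<in>{..<3::nat}. r * r mod 3 \<noteq> 2"
  by (simp add: lessThan_nat_numeral)

lemma sq_mod3: "(k::nat) * k mod 3 \<noteq> 2"
proof -
  have "k * k mod 3 = (k mod 3) * (k mod 3) mod 3" by (simp add: mod_mult_eq)
  moreover have "k mod 3 \<in> {..<3}" by simp
  ultimately show ?thesis using sq3_all by metis
qed

lemma nt2: "(k::nat) * k mod 9 \<noteq> 3" using sq_mod9[of k] by auto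

lemma nt4: "2 * ((k::nat) * k) mod 9 \<noteq> 3"
proof -
  have "2 * (k * k) mod 9 = 2 * (k * k mod 9) mod 9" by (simp add: mod_mult_right_eq)
  then show ?thesis using sq_mod9[of k] by auto
qed

lemma nt3: "((k::nat) * k + 6 * (l * l)) mod 9 \<noteq> 3"
proof -
  have "(k * k + 6 * (l * l)) mod 9 = (k * k mod 9 + 6 * (l * l) mod 9) mod 9"
    by (simp add: mod_add_eq)
  also have "6 * (l * l) mod 9 = 6 * (l * l mod 9) mod 9" by (simp add: mod_mult_right_eq)
  also have "(k * k mod 9 + 6 * (l * l mod 9) mod 9) mod 9 = (k * k mod 9 + 6 * (l * l mod 9)) mod 9"
    by (simp add: mod_add_right_eq)
  finally have "(k * k + 6 * (l * l)) mod 9 = (k * k mod 9 + 6 * (l * l mod 9)) mod 9" .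
  then show ?thesis using sq_mod9[of k] sq_mod9[of l] by auto
qed

lemma alg1:
  fixes a2 i2 a4 i4 i1 :: "'a::comm_ring_1"
  assumes "a2 * i2 = 1" "a4 * i4 = 1"
  shows "a4 ^ k * a2 ^ 3 * (i1 ^ 2 * i2 ^ (2 * (k + 1))) = a2 ^ 5 * i4 ^ 2 * i1 ^ 2 * (i2 ^ 2 * a4) ^ (k + 2)"
proof -
  have "a2 ^ 5 * i4 ^ 2 * i1 ^ 2 * (i2 ^ 2 * a4) ^ (k + 2)
      = (a4 ^ k * a2 ^ 3 * (i1 ^ 2 * i2 ^ (2 * (k + 1)))) * (a2 * i2) ^ 2 * (a4 * i4) ^ 2"
    by (simp add: power_mult_distrib power_add power_mult[symmetric] mult_ac eval_nat_numeral)
  then show ?thesis using assms by simp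
qed

lemma eta_inv': "eta_fps m * inverse (eta_fps m) = 1" by (simp add: inverse_mult_eq_1')

lemma inv_th2: "inverse (th (-1) 2) = inverse (eta_fps 2) ^ 2 * eta_fps 4"
  using th_neg[of 2] by (simp add: fps_inverse_mult fps_inverse_power)

lemma Gform:
  assumes c: "c \<ge> 1"
  shows "overcubic_gf c = th 1 1 * inverse (th (-1) 2) ^ (c + 1)"
proof -
  obtain k where k: "c = k + 1" using c by (metis add.commute le_Suc_ex)
  have "overcubic_gf c = eta_fps 4 ^ k * eta_fps 2 ^ 3 * (inverse (eta_fps 1) ^ 2 * inverse (eta_fps 2) ^ (2 * (k + 1)))"
    unfolding overcubic_gf_def k by (simp add: fps_inverse_mult fps_inverse_power)
  also have "\<dots> = eta_fps 2 ^ 5 * inverse (eta_fps 4) ^ 2 * inverse (eta_fps 1) ^ 2 * (inverse (eta_fps 2) ^ 2 * eta_fps 4) ^ (k + 2)"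
    by (rule alg1) (simp_all add: eta_inv')
  also have "\<dots> = th 1 1 * inverse (th (-1) 2) ^ (c + 1)"
    unfolding th_pos inv_th2 k by simp
  finally show ?thesis .
qed

definition cg :: "rat fps \<Rightarrow> rat fps \<Rightarrow> bool" where
  "cg a b \<longleftrightarrow> Mm 3 (a - b) \<and> Zp a \<and> Zp b"

lemma cg_refl: "Zp a \<Longrightarrow> cg a a" by (simp add: cg_def)
lemma cg_mult: "cg a b \<Longrightarrow> cg c d \<Longrightarrow> cg (a * c) (b * d)"
  unfolding cg_def by (auto intro: cong_mult Zp_mult)
lemma cg_power: "cg a b \<Longrightarrow> cg (a ^ k) (b ^ k)"
  unfolding cg_def by (auto intro: cong_power Zp_power)
lemma cg_trans: "cg a b \<Longrightarrow> cg b c \<Longrightarrow> cg a c"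
  unfolding cg_def by (auto intro: cong_trans)
lemma cg_eq: "a = b \<Longrightarrow> Zp a \<Longrightarrow> cg a b" by (simp add: cg_def)

lemma Zp_I2: "Zp (inverse (th (-1) 2))"
  by (rule Zp_inverse) (auto intro: Zp_th)

lemma cg_eta: "m \<ge> 1 \<Longrightarrow> cg (eta_fps m ^ 3) (eta_fps (3 * m))"
  unfolding cg_def using eta_frob by (auto intro: Zp_power Zp_eta)

lemma cg_inv_eta: "m \<ge> 1 \<Longrightarrow> cg (inverse (eta_fps m) ^ 3) (inverse (eta_fps (3 * m)))"
proof -
  assume m: "m \<ge> 1"
  have "Mm 3 (inverse (eta_fps m ^ 3) - inverse (eta_fps (3 * m)))"
    using eta_frob[OF m] by (intro cong_inverse) (auto intro: Zp_power Zp_eta simp: fps_power_zeroth)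
  then show ?thesis unfolding cg_def
    by (auto simp: fps_inverse_power intro: Zp_power Zp_inv_eta)
qed

definition J3 where "J3 = inverse (eta_fps 6) ^ 2 * eta_fps 12"
definition J9 where "J9 = inverse (eta_fps 18) ^ 2 * eta_fps 36"

lemma Zp_J3: "Zp J3" and Zp_J9: "Zp J9"
  unfolding J3_def J9_def by (auto intro!: Zp_mult Zp_power Zp_eta Zp_inv_eta)
lemma Sp_J3: "Sp 3 J3" and Sp_J9: "Sp 9 J9"
  unfolding J3_def J9_def by (auto intro!: Sp_mult Sp_power Sp_eta Sp_inv_eta)

lemma cg_I3: "cg (inverse (th (-1) 2) ^ 3) J3"
proof -
  have "inverse (th (-1) 2) ^ 3 = (inverse (eta_fps 2) ^ 3) ^ 2 * eta_fps 4 ^ 3"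
    unfolding inv_th2 by (simp add: power_mult_distrib power_mult[symmetric] mult.commute)
  moreover have "cg ((inverse (eta_fps 2) ^ 3) ^ 2 * eta_fps 4 ^ 3) (inverse (eta_fps (3*2)) ^ 2 * eta_fps (3*4))"
    by (intro cg_mult cg_power cg_inv_eta cg_eta) simp_all
  ultimately show ?thesis unfolding J3_def by simp
qed

lemma cg_I9: "cg (inverse (th (-1) 2) ^ 9) J9"
proof -
  have "cg ((inverse (th (-1) 2) ^ 3) ^ 3) (J3 ^ 3)" by (intro cg_power cg_I3)
  moreover have "J3 ^ 3 = (inverse (eta_fps 6) ^ 3) ^ 2 * eta_fps 12 ^ 3"
    unfolding J3_def by (simp add: power_mult_distrib power_mult[symmetric] mult.commute)
  moreover have "cg ((inverse (eta_fps 6) ^ 3) ^ 2 * eta_fps 12 ^ 3) (inverse (eta_fps (3*6)) ^ 2 * eta_fps (3*12))"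
    by (intro cg_mult cg_power cg_inv_eta cg_eta) simp_all
  ultimately have "cg ((inverse (th (-1) 2) ^ 3) ^ 3) J9" unfolding J9_def
    by (simp add: cg_trans)
  moreover have "(inverse (th (-1) 2) ^ 3) ^ 3 = inverse (th (-1) 2) ^ 9"
    by (simp only: power_mult[symmetric]) simp
  ultimately show ?thesis by simp
qed

lemma cg_J3sq: "cg (th (-1) 6 * J9) (J3 ^ 2)"
proof -
  have "th (-1) 6 * J9 = (eta_fps 6 ^ 2 * inverse (eta_fps 12)) * (inverse (eta_fps 18) ^ 2 * eta_fps 36)"
    unfolding th_neg[of 6, simplified] J9_def by simp
  moreover have "cg ((eta_fps 6 ^ 2 * inverse (eta_fps 12)) * (inverse (eta_fps 18) ^ 2 * eta_fps 36))
                    ((eta_fps 6 ^ 2 * inverse (eta_fps 12)) * ((inverse (eta_fps 6) ^ 3) ^ 2 * eta_fps 12 ^ 3))"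
  proof -
    have a: "cg (inverse (eta_fps 18)) (inverse (eta_fps 6) ^ 3)"
      using cg_inv_eta[of 6] unfolding cg_def by (auto intro: cong_sym)
    have b: "cg (eta_fps 36) (eta_fps 12 ^ 3)"
      using cg_eta[of 12] unfolding cg_def by (auto intro: cong_sym)
    show ?thesis
      by (intro cg_mult cg_refl cg_power a b) (auto intro!: Zp_mult Zp_power Zp_eta Zp_inv_eta)
  qed
  moreover have "(eta_fps 6 ^ 2 * inverse (eta_fps 12)) * ((inverse (eta_fps 6) ^ 3) ^ 2 * eta_fps 12 ^ 3) = J3 ^ 2"
  proof -
    have u6: "eta_fps 6 * inverse (eta_fps 6) = 1" and u12: "eta_fps 12 * inverse (eta_fps 12) = 1"
      by (simp_all add: inverse_mult_eq_1')
    have "(eta_fps 6 ^ 2 * inverse (eta_fps 12)) * ((inverse (eta_fps 6) ^ 3) ^ 2 * eta_fps 12 ^ 3)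
        = J3 ^ 2 * (eta_fps 6 * inverse (eta_fps 6)) ^ 2 * (eta_fps 12 * inverse (eta_fps 12))"
      unfolding J3_def by (simp add: power_mult_distrib power_mult[symmetric] mult_ac eval_nat_numeral)
    then show ?thesis using u6 u12 by simp
  qed
  ultimately show ?thesis by simp
qed

lemma Ints_m1: "(-1::rat) \<in> \<int>" by simp

lemma G_mod2:
  assumes c: "c \<ge> 1" and t: "t \<ge> 1"
  shows "overcubic_gf c $ t / 2 \<in> \<int>"
proof -
  let ?I = "inverse (th (-1) 2)"
  have a: "Mm 2 (th (-1) 2 - 1)" by (rule th_mod2) simp
  have "Mm 2 (?I - inverse 1)"
    by (rule cong_inverse[OF a]) (auto intro: Zp_th)
  then have b: "Mm 2 (?I - 1)" by simp
  have "Mm 2 (?I ^ (c+1) - 1 ^ (c+1))" by (rule cong_power[OF b Zp_I2]) simp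
  moreover have "Mm 2 (th 1 1 - 1)" by (rule th_mod2) simp
  ultimately have "Mm 2 (th 1 1 * ?I ^ (c+1) - 1 * 1 ^ (c+1))"
    using cong_mult[OF _ _ Zp_1 Zp_power[OF Zp_I2]] by blast
  then have "(overcubic_gf c - 1) $ t / of_int 2 \<in> \<int>" unfolding Gform[OF c] Mm_def by simp
  then show ?thesis using t by simp
qed

lemma Xk_step:
  fixes b :: "'a::comm_ring_1"
  shows "(1 + b) ^ Suc k - 1 - of_nat (Suc k) * b = ((1 + b) ^ k - 1 - of_nat k * b) * (1 + b) + of_nat k * (b * b)"
  by (simp add: algebra_simps)

lemma Zp_of_nat: "Zp (of_nat k)"
  unfolding fps_of_nat[symmetric] by (rule Zp_const) simp

lemma G_mod4:
  assumes c: "c \<ge> 1" and h1: "th 1 1 $ t = 0" and h2: "th (-1) 2 $ t = 0"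
  shows "overcubic_gf c $ t / 4 \<in> \<int>"
proof -
  let ?I = "inverse (th (-1) 2)"
  define a where "a = th (-1) 2 - 1"
  define b where "b = ?I - 1"
  define a1 where "a1 = th 1 1 - 1"
  have ma: "Mm 2 a" unfolding a_def by (rule th_mod2) simp
  have mb: "Mm 2 b" unfolding b_def using cong_inverse[OF ma[unfolded a_def]] by (simp add: Zp_th)
  have ma1: "Mm 2 a1" unfolding a1_def by (rule th_mod2) simp
  have Zb: "Zp b" using Mm_Zp[OF _ mb] by simp
  have inv1: "th (-1) 2 * ?I = 1" by (simp add: inverse_mult_eq_1')
  have "b = - a - a * b"
  proof -
    have e1: "(1 + a) * (1 + b) = 1" using inv1 by (simp add: a_def b_def)
    have "b = (1 + a) * (1 + b) - 1 - a - a * b" by (simp add: algebra_simps)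
    also have "\<dots> = - a - a * b" unfolding e1 by simp
    finally show ?thesis .
  qed
  then have bt: "b $ t = - a $ t - (a * b) $ t" by (metis fps_sub_nth fps_neg_nth)
  have at: "a $ t = 0" using h2 by (cases "t = 0") (auto simp: a_def)
  have mab: "Mm 4 (a * b)" using Mm_mult2[OF ma mb] by simp
  have bt4: "b $ t / 4 \<in> \<int>"
  proof -
    have "b $ t / 4 = - ((a * b) $ t / of_int 4)" using bt at by simp
    then show ?thesis using mab unfolding Mm_def by (metis Ints_minus)
  qed
  define k where "k = c + 1"
  define Xk where "Xk n = (1 + b) ^ n - 1 - of_nat n * b" for n
  have mX: "Mm 4 (Xk n)" for n
  proof (induction n)
    case 0 then show ?case by (simp add: Xk_def)
  next
    case (Suc n)
    have "Xk (Suc n) = Xk n * (1 + b) + of_nat n * (b * b)" unfolding Xk_def by (rule Xk_step)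
    moreover have "Mm 4 (Xk n * (1 + b))" using Suc Zb by (intro Mm_mult Zp_add) auto
    moreover have "Mm 4 (of_nat n * (b * b))"
    proof -
      have "Mm 4 (b * b)" using Mm_mult2[OF mb mb] by simp
      then show ?thesis by (rule Mm_mult_left[OF Zp_of_nat])
    qed
    ultimately show ?case by (simp add: Mm_add)
  qed
  have Ib: "?I = 1 + b" by (simp add: b_def)
  have Geq: "overcubic_gf c = th 1 1 + of_nat k * b + of_nat k * (a1 * b) + th 1 1 * Xk k"
  proof -
    have "overcubic_gf c = th 1 1 * (1 + of_nat k * b + Xk k)"
      unfolding Gform[OF c] Ib Xk_def k_def by simp
    also have "\<dots> = th 1 1 + of_nat k * b + of_nat k * (a1 * b) + th 1 1 * Xk k"
      by (simp add: a1_def algebra_simps)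
    finally show ?thesis .
  qed
  have r1: "Mm 4 (of_nat k * (a1 * b))"
  proof -
    have "Mm 4 (a1 * b)" using Mm_mult2[OF ma1 mb] by simp
    then show ?thesis by (rule Mm_mult_left[OF Zp_of_nat])
  qed
  have r2: "Mm 4 (th 1 1 * Xk k)" by (intro Mm_mult_left mX Zp_th) simp
  have "overcubic_gf c $ t / 4 = th 1 1 $ t / 4 + of_nat k * (b $ t / 4)
      + (of_nat k * (a1 * b)) $ t / of_int 4 + (th 1 1 * Xk k) $ t / of_int 4"
    unfolding Geq by (simp add: fps_of_nat add_divide_distrib)
  also have "\<dots> \<in> \<int>" using h1 bt4 r1 r2 unfolding Mm_def by (intro Ints_add Ints_mult) auto
  finally show ?thesis .
qed

lemma dvd_mod_eq: "(i::nat) \<le> t \<Longrightarrow> d dvd (t - i) \<Longrightarrow> i mod d = t mod d"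
proof -
  assume "i \<le> t" "d dvd (t - i)"
  then obtain q where "t - i = d * q" by (auto elim: dvdE)
  then have "t = i + d * q" using \<open>i \<le> t\<close> by simp
  then show ?thesis by simp
qed

lemma G_mod3_gen:
  assumes "cg (overcubic_gf c) (F * S)" "Sp d S"
      and "\<And>i. i \<le> t \<Longrightarrow> F $ i \<noteq> 0 \<Longrightarrow> i mod d \<noteq> t mod d"
  shows "overcubic_gf c $ t / 3 \<in> \<int>"
proof -
  have z: "(F * S) $ t = 0"
  proof (rule mult_nth_zero)
    fix i assume i: "i \<le> t" "F $ i \<noteq> 0" "S $ (t - i) \<noteq> 0"
    then have "d dvd (t - i)" using assms(2) by (auto simp: Sp_def)
    then show False using assms(3)[OF i(1,2)] dvd_mod_eq[OF i(1)] by simp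
  qed
  have "(overcubic_gf c - F * S) $ t / of_int 3 \<in> \<int>" using assms(1) unfolding cg_def Mm_def by blast
  then show ?thesis using z by simp
qed

lemma th1_supp: "th 1 1 $ i \<noteq> 0 \<Longrightarrow> \<exists>k. i = k * k" using th_supp[of 1 1 i] by simp

lemma G_case1:
  assumes "c = 3 * j + 2"
  shows "overcubic_gf c $ (3 * n + 2) / 3 \<in> \<int>"
proof (rule G_mod3_gen)
  let ?I = "inverse (th (-1) 2)"
  have ce: "c + 1 = 3 * (j + 1)" and c1: "c \<ge> 1" using assms by simp_all
  have "overcubic_gf c = th 1 1 * (?I ^ 3) ^ (j + 1)"
    unfolding Gform[OF c1] ce by (simp only: power_mult)
  moreover have "cg (th 1 1 * (?I ^ 3) ^ (j + 1)) (th 1 1 * J3 ^ (j + 1))"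
    by (intro cg_mult cg_refl cg_power cg_I3 Zp_th) simp
  ultimately show "cg (overcubic_gf c) (th 1 1 * J3 ^ (j + 1))" by simp
  show "Sp 3 (J3 ^ (j + 1))" by (intro Sp_power Sp_J3)
  fix i assume "i \<le> 3 * n + 2" "th 1 1 $ i \<noteq> 0"
  then obtain k where "i = k * k" using th1_supp by blast
  moreover have "(3 * n + 2) mod 3 = (2::nat)" by presburger
  ultimately show "i mod 3 \<noteq> (3 * n + 2) mod 3" using sq_mod3[of k] by simp
qed

lemma G_case3:
  assumes "c = 9 * j + 8"
  shows "overcubic_gf c $ (9 * n + 3) / 3 \<in> \<int>"
proof (rule G_mod3_gen)
  let ?I = "inverse (th (-1) 2)"
  have ce: "c + 1 = 9 * (j + 1)" and c1: "c \<ge> 1" using assms by simp_all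
  have "overcubic_gf c = th 1 1 * (?I ^ 9) ^ (j + 1)"
    unfolding Gform[OF c1] ce by (simp only: power_mult)
  moreover have "cg (th 1 1 * (?I ^ 9) ^ (j + 1)) (th 1 1 * J9 ^ (j + 1))"
    by (intro cg_mult cg_refl cg_power cg_I9 Zp_th) simp
  ultimately show "cg (overcubic_gf c) (th 1 1 * J9 ^ (j + 1))" by simp
  show "Sp 9 (J9 ^ (j + 1))" by (intro Sp_power Sp_J9)
  fix i assume "i \<le> 9 * n + 3" "th 1 1 $ i \<noteq> 0"
  then obtain k where "i = k * k" using th1_supp by blast
  moreover have "(9 * n + 3) mod 9 = (3::nat)" by presburger
  ultimately show "i mod 9 \<noteq> (9 * n + 3) mod 9" using nt2[of k] by simp
qed

lemma th16_supp: "(th 1 1 * th (-1) 6) $ i \<noteq> 0 \<Longrightarrow> i mod 9 \<noteq> 3"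
proof -
  assume nz: "(th 1 1 * th (-1) 6) $ i \<noteq> 0"
  show "i mod 9 \<noteq> 3"
  proof
    assume i9: "i mod 9 = 3"
    have "(th 1 1 * th (-1) 6) $ i = 0"
    proof (rule mult_nth_zero)
      fix x assume x: "x \<le> i" "th 1 1 $ x \<noteq> 0" "th (-1) 6 $ (i - x) \<noteq> 0"
      obtain k where k: "x = k * k" using th1_supp x(2) by blast
      obtain l where l: "i - x = 6 * (l * l)" using th_supp x(3) by blast
      have "i = k * k + 6 * (l * l)" using k l x(1) by simp
      then show False using nt3[of k l] i9 by simp
    qed
    then show False using nz by simp
  qed
qed

lemma G_case2:
  assumes "c = 9 * j + 5"
  shows "overcubic_gf c $ (9 * n + 3) / 3 \<in> \<int>"
proof (rule G_mod3_gen)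
  let ?I = "inverse (th (-1) 2)"
  have ce: "c + 1 = 9 * j + 3 * 2" and c1: "c \<ge> 1" using assms by simp_all
  have e0: "overcubic_gf c = th 1 1 * ((?I ^ 9) ^ j * (?I ^ 3) ^ 2)"
    unfolding Gform[OF c1] ce by (simp only: power_mult power_add)
  have c1: "cg (th 1 1 * ((?I ^ 9) ^ j * (?I ^ 3) ^ 2)) (th 1 1 * (J9 ^ j * J3 ^ 2))"
    by (intro cg_mult cg_refl cg_power cg_I9 cg_I3 Zp_th) simp
  have c2: "cg (th 1 1 * (J9 ^ j * J3 ^ 2)) (th 1 1 * (J9 ^ j * (th (-1) 6 * J9)))"
  proof -
    have "cg (J3 ^ 2) (th (-1) 6 * J9)" using cg_J3sq unfolding cg_def by (auto intro: cong_sym)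
    then show ?thesis by (intro cg_mult cg_refl cg_power Zp_th Zp_J9) simp_all
  qed
  have e3: "th 1 1 * (J9 ^ j * (th (-1) 6 * J9)) = (th 1 1 * th (-1) 6) * J9 ^ (j + 1)"
    by (simp add: algebra_simps)
  have "cg (overcubic_gf c) (th 1 1 * (J9 ^ j * (th (-1) 6 * J9)))"
    unfolding e0 by (rule cg_trans[OF c1 c2])
  then show "cg (overcubic_gf c) ((th 1 1 * th (-1) 6) * J9 ^ (j + 1))"
    by (simp only: e3)
  show "Sp 9 (J9 ^ (j + 1))" by (intro Sp_power Sp_J9)
  fix i assume "i \<le> 9 * n + 3" "(th 1 1 * th (-1) 6) $ i \<noteq> 0"
  moreover have "(9 * n + 3) mod 9 = (3::nat)" by presburger
  ultimately show "i mod 9 \<noteq> (9 * n + 3) mod 9" using th16_supp by simp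
qed

lemma th_9n3:
  "th 1 1 $ (9 * n + 3) = 0" "th (-1) 2 $ (9 * n + 3) = 0"
proof -
  show "th 1 1 $ (9 * n + 3) = 0"
  proof (rule ccontr)
    assume "th 1 1 $ (9 * n + 3) \<noteq> 0"
    then obtain k where "9 * n + 3 = k * k" using th1_supp by blast
    moreover have "(9 * n + 3) mod 9 = (3::nat)" by presburger
    ultimately show False using nt2[of k] by simp
  qed
  show "th (-1) 2 $ (9 * n + 3) = 0"
  proof (rule ccontr)
    assume "th (-1) 2 $ (9 * n + 3) \<noteq> 0"
    then obtain k where "9 * n + 3 = 2 * (k * k)" using th_supp by blast
    moreover have "(9 * n + 3) mod 9 = (3::nat)" by presburger
    ultimately show False using nt4[of k] by simp
  qed
qed

lemma combine6: "(x::rat) / 2 \<in> \<int> \<Longrightarrow> x / 3 \<in> \<int> \<Longrightarrow> \<exists>k::int. x = of_int (6 * k)"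
proof -
  assume a: "x / 2 \<in> \<int>" "x / 3 \<in> \<int>"
  have "x / 6 = x / 2 - x / 3" by simp
  moreover have "x / 2 - x / 3 \<in> \<int>" using a by (intro Ints_diff)
  ultimately have "x / 6 \<in> \<int>" by simp
  then obtain k where "x / 6 = of_int k" by (metis Ints_cases)
  then have "x = of_int (6 * k)" by simp
  then show ?thesis by blast
qed

lemma combine12: "(x::rat) / 4 \<in> \<int> \<Longrightarrow> x / 3 \<in> \<int> \<Longrightarrow> \<exists>k::int. x = of_int (12 * k)"
proof -
  assume a: "x / 4 \<in> \<int>" "x / 3 \<in> \<int>"
  have "x / 12 = x / 3 - x / 4" by simp
  moreover have "x / 3 - x / 4 \<in> \<int>" using a by (intro Ints_diff)
  ultimately have "x / 12 \<in> \<int>" by simp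
  then obtain k where "x / 12 = of_int k" by (metis Ints_cases)
  then have "x = of_int (12 * k)" by simp
  then show ?thesis by blast
qed

theorem theorem1p2:
  fixes n i :: nat
  assumes "i \<ge> 1"
  shows "(\<exists>k::int. abar (3 * i + 2) (3 * n + 2) = of_int (6 * k))
       \<and> (\<exists>k::int. abar (9 * i + 5) (9 * n + 3) = of_int (12 * k))
       \<and> (\<exists>k::int. abar (9 * i + 8) (9 * n + 3) = of_int (12 * k))"
proof (intro conjI)
  show "\<exists>k::int. abar (3 * i + 2) (3 * n + 2) = of_int (6 * k)"
    unfolding abar_def by (intro combine6 G_mod2 G_case1[OF refl]) simp_all
  show "\<exists>k::int. abar (9 * i + 5) (9 * n + 3) = of_int (12 * k)"
    unfolding abar_def by (intro combine12 G_mod4 G_case2[OF refl] th_9n3) simp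
  show "\<exists>k::int. abar (9 * i + 8) (9 * n + 3) = of_int (12 * k)"
    unfolding abar_def by (intro combine12 G_mod4 G_case3[OF refl] th_9n3) simp
qed

end
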